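(* Let $\hbar>0$ and let $f\in L^2(\mathbb{R})$ be such that the nodal set of $Wf$ is bounded and $Wf$ is centered at the origin, so that $f=\mu(S^{-1})\big(\sum_{n=0}^N b_nh_n\big)$ with $b_N\neq0$ as in the context. If $Wf$ vanishes on a circle of radius $R$ centered at the origin, then $$N\geq\frac{R^2/\hbar-1}{2}.$$
   Context: For $f,g\in L^2(\mathbb{R})$, $W(f,g)(x,p)=\frac{1}{2\pi\hbar}\int_{\mathbb{R}} f(x+\tau/2)\overline{g(x-\tau/2)}e^{-\frac{i}{\hbar}p\tau}\,d\tau$ and $Wf=W(f,f)$. Hermite functions: $h_n(x)=\frac{1}{\sqrt[4]{\pi\hbar}\sqrt{2^nn!}}e^{-x^2/(2\hbar)}H_n(x/\sqrt{\hbar})$, $H_n(x)=(-1)^ne^{x^2}\frac{d^n}{dx^n}e^{-x^2}$. For a real $2\times2$ matrix $S$ with $\det S=1$, $\mu(S)$ is a metaplectic operator on $L^2(\mathbb{R})$, satisfying $W(\mu(S)f,\mu(S)g)(z)=W(f,g)(S^{-1}z)$. $Wf$ with bounded nodal set being centered at the origin means $f=\mu(S^{-1})\sum_{n=0}^Nb_nh_n$ (up to a unimodular constant) for some such $S$, $N\in\mathbb{N}_0$ and $b_0,\dots,b_N\in\mathbb{C}$, $b_N\ne0$, so that $Wf(z)=\sum_{n,m=0}^Nb_n\overline{b_m}W(h_n,h_m)(Sz)$; $N$ is the integer in this representation. *)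

theory Defs
  imports "HOL-Analysis.Analysis"
begin

definition wigner :: "real \<Rightarrow> (real \<Rightarrow> complex) \<Rightarrow> (real \<Rightarrow> complex) \<Rightarrow> real \<Rightarrow> real \<Rightarrow> complex" where
  "wigner hbar f g x p =
     complex_of_real (1 / (2 * pi * hbar)) *
     (LINT \<tau>|lborel. f (x + \<tau> / 2) * cnj (g (x - \<tau> / 2)) * exp (- \<i> * complex_of_real (p * \<tau> / hbar)))"

definition hermite_poly :: "nat \<Rightarrow> real \<Rightarrow> real" where
  "hermite_poly n x = (-1) ^ n * exp (x\<^sup>2) * ((deriv ^^ n) (\<lambda>t. exp (- t\<^sup>2)) x)"

definition hermite_fun :: "real \<Rightarrow> nat \<Rightarrow> real \<Rightarrow> complex" where
  "hermite_fun hbar n x = complex_of_real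
     (1 / (root 4 (pi * hbar) * sqrt (2 ^ n * fact n)) * exp (- x\<^sup>2 / (2 * hbar)) * hermite_poly n (x / sqrt hbar))"

definition square_integrable :: "(real \<Rightarrow> complex) \<Rightarrow> bool" where
  "square_integrable f \<longleftrightarrow> f \<in> borel_measurable lborel \<and> integrable lborel (\<lambda>x. (norm (f x))\<^sup>2)"

end

theory Submission
  imports Defs "HOL-Probability.Probability" "HOL-Computational_Algebra.Polynomial"
begin

definition gk :: "real \<Rightarrow> real \<Rightarrow> complex" where
  "gk v s = exp (- (complex_of_real s ^ 2) - 2 * \<i> * complex_of_real v * complex_of_real s)"

lemma gk_meas[measurable]: "gk v \<in> borel_measurable borel"
  unfolding gk_def by measurable

lemma norm_gk: "norm (gk v s) = exp (- (s^2))"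
  unfolding gk_def by (simp add: norm_exp_eq_Re power2_eq_square)

lemma gk_alt: "gk v s = complex_of_real (exp (- (s^2))) * iexp (- 2 * v * s)"
  unfolding gk_def by (simp add: exp_add[symmetric] exp_of_real[symmetric] algebra_simps)

lemma integrable_moment: "integrable lborel (\<lambda>s::real. s^k * exp (- (s^2)))"
proof -
  have "integrable lborel (\<lambda>x. std_normal_density x * x^k)" by (rule integrable_std_normal_moment)
  then have "integrable lborel (\<lambda>s. std_normal_density (0 + sqrt 2 * s) * (0 + sqrt 2 * s)^k)"
    by (rule lborel_integrable_real_affine) simp
  then have "integrable lborel (\<lambda>s. (sqrt (2*pi) / sqrt 2 ^ k) * (std_normal_density (0 + sqrt 2 * s) * (0 + sqrt 2 * s)^k))"
    by (rule integrable_mult_right)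
  moreover have "(sqrt (2*pi) / sqrt 2 ^ k) * (std_normal_density (0 + sqrt 2 * s) * (0 + sqrt 2 * s)^k) = s^k * exp (- (s^2))" for s
    by (simp add: std_normal_density_def power_mult_distrib field_simps)
  ultimately show ?thesis by simp
qed

lemma integrable_mon_gk: "integrable lborel (\<lambda>s. complex_of_real s ^ k * gk v s)"
proof (rule Bochner_Integration.integrable_bound[OF integrable_moment[of k]])
  show "(\<lambda>s. complex_of_real s ^ k * gk v s) \<in> borel_measurable lborel" by measurable
  show "AE x in lborel. norm (complex_of_real x ^ k * gk v x) \<le> norm (x ^ k * exp (- x\<^sup>2))"
    by (simp add: norm_mult norm_gk abs_mult power_abs norm_power)
qed

lemma integrable_poly_gk: "integrable lborel (\<lambda>s. poly P (complex_of_real s) * gk v s)"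
proof -
  have "integrable lborel (\<lambda>s. \<Sum>i\<le>degree P. coeff P i * (complex_of_real s ^ i * gk v s))"
    using integrable_mon_gk by auto
  then show ?thesis by (simp add: poly_altdef sum_distrib_right mult.assoc)
qed

lemma gauss_ft: "integral\<^sup>L lborel (gk v) = complex_of_real (sqrt pi * exp (- (v^2)))"
proof -
  define t where "t = - sqrt 2 * v"
  have "char std_normal_distribution t = complex_of_real (exp (- (t^2) / 2))"
    by (simp add: char_std_normal_distribution)
  moreover have "t^2/2 = v^2" by (simp add: t_def power_mult_distrib)
  ultimately have 1: "char std_normal_distribution t = complex_of_real (exp (- (v^2)))" by simp
  have "char std_normal_distribution t = integral\<^sup>L lborel (\<lambda>x. std_normal_density x *\<^sub>R iexp (t * x))"
    unfolding char_def by (subst integral_density) (auto simp: normal_density_nonneg)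
  also have "\<dots> = \<bar>sqrt 2\<bar> *\<^sub>R integral\<^sup>L lborel (\<lambda>s. std_normal_density (0 + sqrt 2 * s) *\<^sub>R iexp (t * (0 + sqrt 2 * s)))"
    by (rule lborel_integral_real_affine) simp
  also have "(\<lambda>s. std_normal_density (0 + sqrt 2 * s) *\<^sub>R iexp (t * (0 + sqrt 2 * s))) = (\<lambda>s. (1 / sqrt (2*pi)) *\<^sub>R gk v s)"
    by (rule ext) (simp add: std_normal_density_def gk_alt t_def power_mult_distrib scaleR_conv_of_real field_simps)
  also have "integral\<^sup>L lborel \<dots> = (1 / sqrt (2*pi)) *\<^sub>R integral\<^sup>L lborel (gk v)" by simp
  finally have "complex_of_real (exp (- (v^2))) = (sqrt 2 / sqrt (2*pi)) *\<^sub>R integral\<^sup>L lborel (gk v)"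
    using 1 by simp
  then have "integral\<^sup>L lborel (gk v) = (sqrt (2*pi) / sqrt 2) *\<^sub>R complex_of_real (exp (- (v^2)))"
    by (simp add: field_simps)
  also have "sqrt (2*pi) / sqrt 2 = sqrt pi" by (simp add: real_sqrt_mult)
  finally show ?thesis by (simp add: scaleR_conv_of_real)
qed

lemma mon_exp_lim:
  assumes F: "filterlim (\<lambda>s::real. s^2) at_top F"
  shows "((\<lambda>s. \<bar>s\<bar>^i * exp (- (s^2))) \<longlongrightarrow> 0) F"
proof (rule Lim_null_comparison)
  have a: "((\<lambda>s. (s^2)^i / exp (s^2)) \<longlongrightarrow> 0) F"
    using filterlim_compose[OF tendsto_power_div_exp_0 F] by simp
  have b: "((\<lambda>s. 1 / exp (s^2)) \<longlongrightarrow> 0) F"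
    using filterlim_compose[OF tendsto_power_div_exp_0[of 0] F] by simp
  show "((\<lambda>s. 1 / exp (s^2) + (s^2)^i / exp (s^2)) \<longlongrightarrow> 0) F"
    using tendsto_add[OF b a] by simp
  show "\<forall>\<^sub>F x in F. norm (\<bar>x\<bar> ^ i * exp (- x\<^sup>2)) \<le> 1 / exp (x\<^sup>2) + (x\<^sup>2) ^ i / exp (x\<^sup>2)"
  proof (intro always_eventually allI)
    fix x :: real
    have "\<bar>x\<bar>^i \<le> 1 + (x^2)^i"
    proof (cases "\<bar>x\<bar> \<le> 1")
      case True then have "\<bar>x\<bar>^i \<le> 1" by (simp add: power_le_one)
      moreover have "0 \<le> (x^2)^i" by simp
      ultimately show ?thesis by linarith
    next
      case False
      then have "\<bar>x\<bar>^i \<le> \<bar>x\<bar>^(2*i)" by (intro power_increasing) auto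
      also have "\<dots> = (x^2)^i" by (simp add: power_mult power2_abs)
      finally show ?thesis by simp
    qed
    then have "\<bar>x\<bar>^i * exp (- x\<^sup>2) \<le> (1 + (x^2)^i) * exp (- x\<^sup>2)"
      by (intro mult_right_mono) auto
    then show "norm (\<bar>x\<bar> ^ i * exp (- x\<^sup>2)) \<le> 1 / exp (x\<^sup>2) + (x\<^sup>2) ^ i / exp (x\<^sup>2)"
      by (simp add: exp_minus field_simps)
  qed
qed

lemma poly_gk_lim:
  assumes F: "filterlim (\<lambda>s::real. s^2) at_top F"
  shows "((\<lambda>s. poly P (complex_of_real s) * gk v s) \<longlongrightarrow> 0) F"
proof (rule Lim_null_comparison)
  show "((\<lambda>s. \<Sum>i\<le>degree P. norm (coeff P i) * (\<bar>s\<bar>^i * exp (- (s^2)))) \<longlongrightarrow> 0) F"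
    using tendsto_sum[of "{..degree P}" "\<lambda>i s. norm (coeff P i) * (\<bar>s\<bar>^i * exp (- (s^2)))" "\<lambda>_. 0" F]
      tendsto_mult_right_zero[OF mon_exp_lim[OF F]] by simp
  show "\<forall>\<^sub>F x in F. norm (poly P (complex_of_real x) * gk v x) \<le> (\<Sum>i\<le>degree P. norm (coeff P i) * (\<bar>x\<bar>^i * exp (- (x^2))))"
  proof (intro always_eventually allI)
    fix x :: real
    have "norm (poly P (complex_of_real x) * gk v x) = norm (\<Sum>i\<le>degree P. coeff P i * complex_of_real x ^ i) * exp (- (x^2))"
      by (simp add: poly_altdef norm_mult norm_gk)
    also have "\<dots> \<le> (\<Sum>i\<le>degree P. norm (coeff P i * complex_of_real x ^ i)) * exp (- (x^2))"
      by (intro mult_right_mono norm_sum) auto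
    also have "\<dots> = (\<Sum>i\<le>degree P. norm (coeff P i) * (\<bar>x\<bar>^i * exp (- (x^2))))"
      by (simp add: sum_distrib_right norm_mult norm_power mult.assoc)
    finally show "norm (poly P (complex_of_real x) * gk v x) \<le> (\<Sum>i\<le>degree P. norm (coeff P i) * (\<bar>x\<bar>^i * exp (- (x^2))))" .
  qed
qed

lemma sq_at_top: "filterlim (\<lambda>s::real. s^2) at_top at_top"
  by (rule filterlim_pow_at_top[OF _ filterlim_ident]) simp
lemma sq_at_bot: "filterlim (\<lambda>s::real. s^2) at_top at_bot"
  by (rule filterlim_pow_at_bot_even[OF _ filterlim_ident]) simp_all

fun Hr :: "nat \<Rightarrow> 'a::comm_ring_1 poly" where
  "Hr 0 = 1"
| "Hr (Suc 0) = [:0, 2:]"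
| "Hr (Suc (Suc n)) = [:0, 2:] * Hr (Suc n) - smult (2 * of_nat (Suc n)) (Hr n)"

lemma Hr_of_real: "poly (Hr n) (complex_of_real x) = complex_of_real (poly (Hr n) x)"
  by (induction n rule: Hr.induct) (simp_all add: algebra_simps)

lemma pderiv_Hr: "pderiv (Hr (Suc n) :: 'a::idom poly) = smult (2 * of_nat (Suc n)) (Hr n)"
proof (induction n rule: Hr.induct)
  case 1 then show ?case by (simp add: pderiv_pCons)
next
  case 2 then show ?case by (simp add: pderiv_pCons pderiv_mult pderiv_diff algebra_simps)
next
  case (3 n)
  have "pderiv (Hr (Suc (Suc (Suc n))) :: 'a poly) =
     [:2:] * Hr (Suc (Suc n)) + [:0,2:] * pderiv (Hr (Suc (Suc n))) - smult (2 * of_nat (Suc (Suc n))) (pderiv (Hr (Suc n)))"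
    by (simp add: pderiv_mult pderiv_diff pderiv_smult pderiv_pCons)
  also have "\<dots> = [:2:] * Hr (Suc (Suc n)) + smult (2 * of_nat (Suc (Suc n))) ([:0,2:] * Hr (Suc n) - smult (2 * of_nat (Suc n)) (Hr n))"
    by (simp only: 3) (simp del: Hr.simps add: smult_diff_right)
  also have "\<dots> = smult (2 * of_nat (Suc (Suc (Suc n)))) (Hr (Suc (Suc n)))"
  proof -
    define X :: "'a poly" where "X = [:0,2:] * Hr (Suc n)"
    define c1 :: 'a where "c1 = 2 * of_nat (Suc n)"
    define c2 :: 'a where "c2 = 2 * of_nat (Suc (Suc n))"
    have H2: "Hr (Suc (Suc n)) = X - smult c1 (Hr n)" unfolding X_def c1_def by simp
    have c3: "2 * of_nat (Suc (Suc (Suc n))) = 2 + c2" unfolding c2_def by simp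
    show ?thesis unfolding H2 c3 X_def[symmetric] c1_def[symmetric] c2_def[symmetric]
      by (simp add: smult_add_left smult_diff_right algebra_simps)
  qed
  finally show ?case .
qed

lemma Hr_Suc_pderiv: "Hr (Suc n) = [:0, 2:] * Hr n - pderiv (Hr n :: 'a::idom poly)"
proof (cases n)
  case 0 then show ?thesis by simp
next
  case (Suc m) then show ?thesis by (simp add: pderiv_Hr)
qed

lemma rodrigues: "(deriv ^^ n) (\<lambda>t. exp (- t\<^sup>2)) = (\<lambda>x::real. (-1)^n * poly (Hr n) x * exp (- x\<^sup>2))"
proof (induction n)
  case 0 then show ?case by simp
next
  case (Suc n)
  have "(deriv ^^ Suc n) (\<lambda>t. exp (- t\<^sup>2)) = deriv (\<lambda>x::real. (-1)^n * poly (Hr n) x * exp (- x\<^sup>2))"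
    using Suc by simp
  also have "\<dots> = (\<lambda>x::real. (-1)^Suc n * poly (Hr (Suc n)) x * exp (- x\<^sup>2))"
  proof
    fix x :: real
    have "((\<lambda>x::real. (-1)^n * poly (Hr n) x * exp (- x\<^sup>2)) has_real_derivative
       (-1)^Suc n * poly (Hr (Suc n)) x * exp (- x\<^sup>2)) (at x)"
      unfolding Hr_Suc_pderiv[of n]
      by (auto intro!: derivative_eq_intros simp: algebra_simps power2_eq_square)
    then show "deriv (\<lambda>x::real. (-1)^n * poly (Hr n) x * exp (- x\<^sup>2)) x = (-1)^Suc n * poly (Hr (Suc n)) x * exp (- x\<^sup>2)"
      by (rule DERIV_imp_deriv)
  qed
  finally show ?case .
qed

lemma hermite_poly_Hr: "hermite_poly n x = poly (Hr n) x"
  unfolding hermite_poly_def rodrigues by (simp add: exp_minus field_simps)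

definition tq :: "nat \<Rightarrow> nat \<Rightarrow> complex \<Rightarrow> nat \<Rightarrow> complex" where
  "tq n m z k = of_nat ((n choose k) * (m choose k) * fact k) * 2 ^ (n + m - k) * (-1) ^ k * z ^ (n - k) * cnj z ^ (m - k)"

definition Qf :: "nat \<Rightarrow> nat \<Rightarrow> complex \<Rightarrow> complex" where
  "Qf n m z = (\<Sum>k\<le>n. tq n m z k)"

lemma tq_out: "n < k \<Longrightarrow> tq n m z k = 0"
  unfolding tq_def by simp

lemma absorb_fact: "(m choose Suc k) * fact (Suc k) = m * ((m - 1) choose k) * (fact k :: nat)"
proof -
  have "(m choose Suc k) * fact (Suc k) = (Suc k * (m choose Suc k)) * (fact k :: nat)"
    unfolding fact_Suc of_nat_id by (simp only: ac_simps)
  also have "\<dots> = m * ((m - 1) choose k) * fact k" by (simp only: binomial_absorption)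
  finally show ?thesis .
qed

lemma tq_step: "tq (Suc n) m z (Suc k) = 2 * z * tq n m z (Suc k) - 2 * of_nat m * tq n (m - 1) z k"
proof (cases "Suc k \<le> m")
  case False
  then show ?thesis
    by (cases m) (auto simp: tq_def binomial_eq_0)
next
  case True
  then obtain i where m: "m = Suc (k + i)" using le_Suc_ex[OF True] by auto
  have key: "(Suc n choose Suc k) * (m choose Suc k) * fact (Suc k) =
      (n choose Suc k) * (m choose Suc k) * fact (Suc k) + (n choose k) * (m * ((m - 1) choose k) * fact k)"
  proof -
    have ab: "(Suc n choose Suc k) * (m choose Suc k) * fact (Suc k) = (n choose Suc k) * ((m choose Suc k) * fact (Suc k)) + (n choose k) * ((m choose Suc k) * fact (Suc k))"
      by (simp only: binomial_Suc_Suc mult.assoc add_mult_distrib add.commute)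
    have c: "(n choose k) * ((m choose Suc k) * fact (Suc k)) = (n choose k) * (m * ((m - 1) choose k) * fact k)"
      by (simp only: absorb_fact)
    show ?thesis using ab c by (metis mult.assoc)
  qed
  show ?thesis
  proof (cases "k < n")
    case True
    then obtain j where n: "n = Suc (k + j)" by (metis less_imp_Suc_add)
    have e1: "Suc n + m - Suc k = Suc (Suc (j + k + i))" using n m by simp
    have e2: "n + m - Suc k = Suc (j + k + i)" using n m by simp
    have e3: "n + (m - 1) - k = Suc (j + k + i)" using n m by simp
    have "tq (Suc n) m z (Suc k) = of_nat ((Suc n choose Suc k) * (m choose Suc k) * fact (Suc k)) * (4 * 2 ^ (j + k + i) * (-1) ^ Suc k * z ^ Suc j * cnj z ^ i)"
      unfolding tq_def e1 using n m by simp
    also have "\<dots> = of_nat ((n choose Suc k) * (m choose Suc k) * fact (Suc k)) * (4 * 2 ^ (j + k + i) * (-1) ^ Suc k * z ^ Suc j * cnj z ^ i)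
       + of_nat ((n choose k) * (m * ((m - 1) choose k) * fact k)) * (4 * 2 ^ (j + k + i) * (-1) ^ Suc k * z ^ Suc j * cnj z ^ i)"
      unfolding key by (simp add: distrib_right)
    also have "\<dots> = 2 * z * tq n m z (Suc k) - 2 * of_nat m * tq n (m - 1) z k"
      unfolding tq_def e2 e3 using n m by (simp add: algebra_simps)
    finally show ?thesis .
  next
    case False
    then have nk: "n \<le> k" by simp
    show ?thesis
    proof (cases "n = k")
      case False
      then show ?thesis using nk by (simp add: tq_def binomial_eq_0)
    next
      case True
      have e1: "Suc n + m - Suc k = Suc (k + i)" using True m by simp
      have e3: "n + (m - 1) - k = k + i" using True m by simp
      have "tq (Suc n) m z (Suc k) = of_nat ((m choose Suc k) * fact (Suc k)) * (2 * 2 ^ (k + i) * (-1) ^ Suc k * cnj z ^ i)"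
        unfolding tq_def e1 using True m by simp
      also have "\<dots> = of_nat (m * ((m - 1) choose k) * fact k) * (2 * 2 ^ (k + i) * (-1) ^ Suc k * cnj z ^ i)"
        by (simp only: absorb_fact)
      also have "\<dots> = 2 * z * tq n m z (Suc k) - 2 * of_nat m * tq n (m - 1) z k"
        unfolding tq_def e3 using True m by (simp add: algebra_simps binomial_eq_0)
      finally show ?thesis .
    qed
  qed
qed

lemma tq_zero: "tq (Suc n) m z 0 = 2 * z * tq n m z 0"
  unfolding tq_def by (simp add: algebra_simps)

lemma Qf_Suc: "Qf (Suc n) m z = 2 * z * Qf n m z - 2 * of_nat m * Qf n (m - 1) z"
proof -
  have "Qf (Suc n) m z = tq (Suc n) m z 0 + (\<Sum>k\<le>n. tq (Suc n) m z (Suc k))"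
    unfolding Qf_def by (rule sum.atMost_Suc_shift)
  also have "\<dots> = 2 * z * (tq n m z 0 + (\<Sum>k\<le>n. tq n m z (Suc k))) - 2 * of_nat m * (\<Sum>k\<le>n. tq n (m - 1) z k)"
    by (simp add: tq_step tq_zero sum_subtractf sum_distrib_left algebra_simps)
  also have "tq n m z 0 + (\<Sum>k\<le>n. tq n m z (Suc k)) = Qf n m z"
    unfolding Qf_def sum.atMost_Suc_shift[symmetric] by (simp add: tq_out)
  finally show ?thesis unfolding Qf_def .
qed

lemma Qf_0: "Qf 0 m z = 2 ^ m * cnj z ^ m"
  unfolding Qf_def tq_def by simp

definition JJ :: "real \<Rightarrow> complex poly \<Rightarrow> complex" where
  "JJ v P = integral\<^sup>L lborel (\<lambda>s. poly P (complex_of_real s) * gk v s)"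

lemma JJ_add: "JJ v (P + Q) = JJ v P + JJ v Q"
  unfolding JJ_def by (simp add: distrib_right integrable_poly_gk)

lemma JJ_diff: "JJ v (P - Q) = JJ v P - JJ v Q"
  unfolding JJ_def by (simp add: left_diff_distrib integrable_poly_gk)

lemma JJ_smult: "JJ v (smult c P) = c * JJ v P"
  unfolding JJ_def by (simp add: mult.assoc)

lemma JJ_minus: "JJ v (- P) = - JJ v P"
  unfolding JJ_def by simp

lemma JJ_one: "JJ v 1 = complex_of_real (sqrt pi * exp (- (v^2)))"
  unfolding JJ_def using gauss_ft[of v] by simp

lemma JJ_byparts: "JJ v (pderiv P) = JJ v (P * [:2 * \<i> * complex_of_real v, 2:])"
proof -
  define Q where "Q = pderiv P - P * [:2 * \<i> * complex_of_real v, 2:]"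
  define F where "F = (\<lambda>s. poly P (complex_of_real s) * gk v s)"
  define f where "f = (\<lambda>s. poly Q (complex_of_real s) * gk v s)"
  have deriv: "(F has_vector_derivative f x) (at x)" for x
  proof -
    have "((\<lambda>z. poly P z * exp (- (z ^ 2) - 2 * \<i> * complex_of_real v * z)) has_field_derivative
       poly Q (complex_of_real x) * exp (- (complex_of_real x ^ 2) - 2 * \<i> * complex_of_real v * complex_of_real x)) (at (complex_of_real x))"
      unfolding Q_def
      by (auto intro!: derivative_eq_intros simp: algebra_simps)
    from has_vector_derivative_real_field[OF this] show ?thesis
      unfolding F_def f_def gk_def by simp
  qed
  have cont: "isCont f x" for x
    unfolding f_def gk_def by (intro continuous_intros)
  have "(LBINT x=-\<infinity>..\<infinity>. f x) = 0 - 0"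
  proof (rule interval_integral_FTC_integrable)
    show "(F has_vector_derivative f x) (at x)" for x by (rule deriv)
    show "isCont f x" for x by (rule cont)
    show "set_integrable lborel (einterval (- \<infinity>) \<infinity>) f"
      unfolding set_integrable_def f_def by (simp add: integrable_poly_gk)
    show "((F \<circ> real_of_ereal) \<longlongrightarrow> 0) (at_right (- \<infinity>))"
      unfolding ereal_tendsto_simps F_def by (rule poly_gk_lim[OF sq_at_bot])
    show "((F \<circ> real_of_ereal) \<longlongrightarrow> 0) (at_left \<infinity>)"
      unfolding ereal_tendsto_simps F_def by (rule poly_gk_lim[OF sq_at_top])
  qed simp
  then have "JJ v Q = 0"
    unfolding JJ_def f_def interval_lebesgue_integral_def set_lebesgue_integral_def by simp
  then show ?thesis unfolding Q_def JJ_diff by simp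
qed

definition Ap :: "complex \<Rightarrow> nat \<Rightarrow> complex poly" where "Ap u n = pcompose (Hr n) [:u, 1:]"
definition Bp :: "complex \<Rightarrow> nat \<Rightarrow> complex poly" where "Bp u n = pcompose (Hr n) [:u, -1:]"

lemma poly_ext: "(\<And>x. poly p x = poly q x) \<Longrightarrow> p = (q :: complex poly)"
  using poly_eq_poly_eq_iff[of p q] by auto

lemma pcompose_X2: "pcompose [:0, 2:] q = smult 2 q"
  by (simp add: pcompose_pCons)

lemma pderiv_Ap: "pderiv (Ap u n) = smult (2 * of_nat n) (Ap u (n - 1))"
proof (cases n)
  case 0 then show ?thesis by (simp add: Ap_def pcompose_1)
next
  case (Suc k) then show ?thesis
    by (simp add: Ap_def pderiv_pcompose pderiv_Hr pcompose_smult pderiv_pCons)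
qed

lemma pderiv_Bp: "pderiv (Bp u n) = - smult (2 * of_nat n) (Bp u (n - 1))"
proof (cases n)
  case 0 then show ?thesis by (simp add: Bp_def pcompose_1)
next
  case (Suc k) then show ?thesis
    by (intro poly_ext) (simp add: Bp_def pderiv_pcompose pderiv_Hr poly_pcompose pderiv_pCons algebra_simps)
qed

lemma Ap_Suc: "Ap u (Suc n) = smult 2 ([:u, 1:] * Ap u n) - smult (2 * of_nat n) (Ap u (n - 1))"
proof -
  have "Ap u (Suc n) = pcompose ([:0, 2:] * Hr n - pderiv (Hr n)) [:u, 1:]"
    unfolding Ap_def by (simp only: Hr_Suc_pderiv)
  also have "\<dots> = smult 2 ([:u, 1:] * Ap u n) - pderiv (Ap u n)"
    by (intro poly_ext) (simp add: poly_pcompose Ap_def pderiv_pcompose pderiv_pCons algebra_simps)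
  finally show ?thesis by (simp add: pderiv_Ap)
qed

lemma Bp_Suc: "Bp u (Suc n) = smult 2 ([:u, -1:] * Bp u n) - smult (2 * of_nat n) (Bp u (n - 1))"
proof -
  have "Bp u (Suc n) = pcompose ([:0, 2:] * Hr n - pderiv (Hr n)) [:u, -1:]"
    unfolding Bp_def by (simp only: Hr_Suc_pderiv)
  also have "\<dots> = smult 2 ([:u, -1:] * Bp u n) + pderiv (Bp u n)"
    by (intro poly_ext) (simp add: poly_pcompose Bp_def pderiv_pcompose pderiv_pCons algebra_simps)
  finally show ?thesis by (simp add: pderiv_Bp)
qed

definition II :: "complex \<Rightarrow> real \<Rightarrow> nat \<Rightarrow> nat \<Rightarrow> complex" where
  "II u v n m = JJ v (Ap u n * Bp u m)"

lemma II_bp: "JJ v (Ap u n * Bp u m * [:2 * \<i> * complex_of_real v, 2:]) =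
   2 * of_nat n * II u v (n - 1) m - 2 * of_nat m * II u v n (m - 1)"
proof -
  have "JJ v (Ap u n * Bp u m * [:2 * \<i> * complex_of_real v, 2:]) = JJ v (pderiv (Ap u n * Bp u m))"
    by (simp add: JJ_byparts)
  also have "pderiv (Ap u n * Bp u m) = smult (2 * of_nat n) (Ap u (n - 1) * Bp u m) - smult (2 * of_nat m) (Ap u n * Bp u (m - 1))"
    by (simp add: pderiv_mult pderiv_Ap pderiv_Bp algebra_simps)
  finally show ?thesis by (simp add: JJ_diff JJ_smult II_def)
qed

lemma II_rec1: "II u v (Suc n) m = 2 * (u - \<i> * complex_of_real v) * II u v n m - 2 * of_nat m * II u v n (m - 1)"
proof -
  define P where "P = Ap u n * Bp u m"
  define c where "c = [:2 * \<i> * complex_of_real v, 2:]"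
  have bp: "JJ v (P * c) = 2 * of_nat n * II u v (n - 1) m - 2 * of_nat m * II u v n (m - 1)"
    unfolding P_def c_def by (rule II_bp)
  have "Ap u (Suc n) * Bp u m = P * c + smult (2 * u - 2 * \<i> * complex_of_real v) P
     - smult (2 * of_nat n) (Ap u (n - 1) * Bp u m)"
    unfolding Ap_Suc P_def c_def by (intro poly_ext) (simp add: algebra_simps)
  then have "II u v (Suc n) m = JJ v (P * c) + (2 * u - 2 * \<i> * complex_of_real v) * JJ v P
     - 2 * of_nat n * II u v (n - 1) m"
    unfolding II_def by (simp only: JJ_add JJ_diff JJ_smult)
  then show ?thesis unfolding bp by (simp add: II_def P_def algebra_simps)
qed

lemma II_rec2: "II u v n (Suc m) = 2 * (u + \<i> * complex_of_real v) * II u v n m - 2 * of_nat n * II u v (n - 1) m"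
proof -
  define P where "P = Ap u n * Bp u m"
  define c where "c = [:2 * \<i> * complex_of_real v, 2:]"
  have bp: "JJ v (P * c) = 2 * of_nat n * II u v (n - 1) m - 2 * of_nat m * II u v n (m - 1)"
    unfolding P_def c_def by (rule II_bp)
  have "Ap u n * Bp u (Suc m) = - (P * c) + smult (2 * u + 2 * \<i> * complex_of_real v) P
     - smult (2 * of_nat m) (Ap u n * Bp u (m - 1))"
    unfolding Bp_Suc P_def c_def by (intro poly_ext) (simp add: algebra_simps)
  then have "II u v n (Suc m) = - JJ v (P * c) + (2 * u + 2 * \<i> * complex_of_real v) * JJ v P
     - 2 * of_nat m * II u v n (m - 1)"
    unfolding II_def by (simp only: JJ_add JJ_diff JJ_smult JJ_minus)
  then show ?thesis unfolding bp by (simp add: II_def P_def algebra_simps)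
qed

lemma II_formula: "II (complex_of_real u) v n m = complex_of_real (sqrt pi * exp (- (v^2))) * Qf n m (complex_of_real u - \<i> * complex_of_real v)"
proof (induction n arbitrary: m)
  case 0
  show ?case
  proof (induction m)
    case 0
    have "II (complex_of_real u) v 0 0 = JJ v 1" by (simp add: II_def Ap_def Bp_def pcompose_1)
    then show ?case by (simp add: JJ_one Qf_0)
  next
    case (Suc m)
    have "cnj (complex_of_real u - \<i> * complex_of_real v) = complex_of_real u + \<i> * complex_of_real v"
      by (simp add: complex_eq_iff)
    then show ?case using Suc by (simp add: II_rec2 Qf_0 algebra_simps)
  qed
next
  case (Suc n)
  show ?case by (simp add: II_rec1 Qf_Suc Suc algebra_simps)
qed

definition cn :: "real \<Rightarrow> nat \<Rightarrow> real" where
  "cn h n = 1 / (root 4 (pi * h) * sqrt (2 ^ n * fact n))"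

definition kap :: "real \<Rightarrow> real" where
  "kap h = 1 / (2 * pi * h) * (2 * sqrt h) * sqrt pi"

lemma gk_alt2: "gk v s = complex_of_real (exp (- (s^2))) * exp (- (2 * \<i> * complex_of_real v * complex_of_real s))"
  unfolding gk_def by (simp add: exp_add[symmetric] exp_of_real[symmetric] algebra_simps)

lemma poly_ApBp: "poly (Ap (complex_of_real u) n * Bp (complex_of_real u) m) (complex_of_real s)
   = complex_of_real (poly (Hr n) (u + s) * poly (Hr m) (u - s))"
proof -
  have "poly (Ap (complex_of_real u) n) (complex_of_real s) = poly (Hr n) (complex_of_real (u + s))"
    by (simp add: Ap_def poly_pcompose)
  moreover have "poly (Bp (complex_of_real u) m) (complex_of_real s) = poly (Hr m) (complex_of_real (u - s))"
    by (simp add: Bp_def poly_pcompose)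
  ultimately show ?thesis by (simp only: poly_mult Hr_of_real of_real_mult)
qed

lemma wigner_herm:
  assumes h: "hbar > 0"
  shows "wigner hbar (hermite_fun hbar n) (hermite_fun hbar m) x p =
    complex_of_real (kap hbar * cn hbar n * cn hbar m * exp (- (x^2 + p^2) / hbar)) *
    Qf n m (complex_of_real (x / sqrt hbar) - \<i> * complex_of_real (p / sqrt hbar))"
proof -
  define F where "F = (\<lambda>\<tau>. hermite_fun hbar n (x + \<tau> / 2) * cnj (hermite_fun hbar m (x - \<tau> / 2)) *
      exp (- \<i> * complex_of_real (p * \<tau> / hbar)))"
  define u where "u = x / sqrt hbar"
  define v where "v = p / sqrt hbar"
  have sh: "sqrt hbar > 0" using h by simp
  have shh: "sqrt hbar * sqrt hbar = hbar" using h by simp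
  have int: "integral\<^sup>L lborel F = \<bar>2 * sqrt hbar\<bar> *\<^sub>R integral\<^sup>L lborel (\<lambda>s. F (0 + (2 * sqrt hbar) * s))"
    by (rule lborel_integral_real_affine) (use sh in simp)
  have pt: "F (0 + (2 * sqrt hbar) * s) = complex_of_real (cn hbar n * cn hbar m * exp (- (x^2) / hbar)) *
      (poly (Ap (complex_of_real u) n * Bp (complex_of_real u) m) (complex_of_real s) * gk v s)" for s
  proof -
    have a1: "(x + 2 * sqrt hbar * s / 2) / sqrt hbar = u + s" unfolding u_def using sh by (simp add: field_simps)
    have a2: "(x - 2 * sqrt hbar * s / 2) / sqrt hbar = u - s" unfolding u_def using sh by (simp add: field_simps)
    have b: "exp (- (x + 2 * sqrt hbar * s / 2)\<^sup>2 / (2 * hbar)) * exp (- (x - 2 * sqrt hbar * s / 2)\<^sup>2 / (2 * hbar))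
        = exp (- (x^2) / hbar) * exp (- (s^2))"
    proof -
      have "- (x + 2 * sqrt hbar * s / 2)\<^sup>2 / (2 * hbar) + - (x - 2 * sqrt hbar * s / 2)\<^sup>2 / (2 * hbar)
          = - (x^2) / hbar + - (s^2)"
        using h shh by (simp add: field_simps power2_eq_square)
      then show ?thesis by (simp add: exp_add[symmetric])
    qed
    have c: "exp (- \<i> * complex_of_real (p * (2 * sqrt hbar * s) / hbar)) = exp (- (2 * \<i> * complex_of_real v * complex_of_real s))"
    proof -
      have "p * (2 * sqrt hbar * s) / hbar = 2 * v * s" unfolding v_def using sh shh
        by (simp add: field_simps)
      then show ?thesis by (simp add: algebra_simps)
    qed
    have "F (0 + (2 * sqrt hbar) * s) =
       complex_of_real (cn hbar n * cn hbar m * (exp (- (x + 2 * sqrt hbar * s / 2)\<^sup>2 / (2 * hbar)) * exp (- (x - 2 * sqrt hbar * s / 2)\<^sup>2 / (2 * hbar)))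
         * (poly (Hr n) (u + s) * poly (Hr m) (u - s))) *
       exp (- \<i> * complex_of_real (p * (2 * sqrt hbar * s) / hbar))"
      unfolding F_def hermite_fun_def cn_def hermite_poly_Hr a1[symmetric] a2[symmetric]
      by (simp add: algebra_simps)
    also have "\<dots> = complex_of_real (cn hbar n * cn hbar m * exp (- (x^2) / hbar)) *
      (poly (Ap (complex_of_real u) n * Bp (complex_of_real u) m) (complex_of_real s) * gk v s)"
      unfolding b c poly_ApBp gk_alt2 by (simp add: algebra_simps)
    finally show ?thesis .
  qed
  have E: "exp (- (x^2) / hbar) * exp (- (v^2)) = exp (- (x^2 + p^2) / hbar)"
  proof -
    have "- (x^2) / hbar + - (v^2) = - (x^2 + p^2) / hbar" unfolding v_def using h
      by (simp add: power_divide field_simps)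
    then show ?thesis by (simp add: exp_add[symmetric])
  qed
  have "wigner hbar (hermite_fun hbar n) (hermite_fun hbar m) x p = complex_of_real (1 / (2 * pi * hbar)) * integral\<^sup>L lborel F"
    unfolding wigner_def F_def by simp
  also have "integral\<^sup>L lborel F = complex_of_real (2 * sqrt hbar) * (complex_of_real (cn hbar n * cn hbar m * exp (- (x^2) / hbar)) *
      II (complex_of_real u) v n m)"
    unfolding int pt II_def JJ_def using sh by (simp add: scaleR_conv_of_real)
  also have "II (complex_of_real u) v n m = complex_of_real (sqrt pi * exp (- (v^2))) * Qf n m (complex_of_real u - \<i> * complex_of_real v)"
    by (rule II_formula)
  also have "complex_of_real (1 / (2 * pi * hbar)) * (complex_of_real (2 * sqrt hbar) * (complex_of_real (cn hbar n * cn hbar m * exp (- (x^2) / hbar)) *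
      (complex_of_real (sqrt pi * exp (- (v^2))) * Qf n m (complex_of_real u - \<i> * complex_of_real v)))) =
     complex_of_real (1 / (2 * pi * hbar) * (2 * sqrt hbar) * sqrt pi * cn hbar n * cn hbar m * (exp (- (x^2) / hbar) * exp (- (v^2)))) *
      Qf n m (complex_of_real u - \<i> * complex_of_real v)"
    by (simp only: of_real_mult mult_ac)
  finally have W: "wigner hbar (hermite_fun hbar n) (hermite_fun hbar m) x p = complex_of_real (1 / (2 * pi * hbar) * (2 * sqrt hbar) * sqrt pi * cn hbar n * cn hbar m * (exp (- (x^2) / hbar) * exp (- (v^2)))) * Qf n m (complex_of_real u - \<i> * complex_of_real v)" .
  show ?thesis using W[unfolded E] unfolding kap_def u_def v_def .
qed

definition Lg :: "nat \<Rightarrow> real \<Rightarrow> real" where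
  "Lg n y = (\<Sum>j\<le>n. real (n choose j) * y ^ j / fact j)"

lemma Lg_ext: "n \<le> M \<Longrightarrow> Lg n y = (\<Sum>j\<le>M. real (n choose j) * y ^ j / fact j)"
  unfolding Lg_def by (rule sum.mono_neutral_left) auto

lemma binom_rec: "real (Suc (Suc n)) * real (Suc (Suc n) choose Suc i) =
   real (2 * n + 3) * real (Suc n choose Suc i) + real (Suc i) * real (Suc n choose i) - real (Suc n) * real (n choose Suc i)"
proof -
  define A where "A = real (Suc n choose i)"
  define B where "B = real (Suc n choose Suc i)"
  define D where "D = real (n choose i)"
  define E where "E = real (n choose Suc i)"
  have F1: "real (Suc (Suc n) choose Suc i) = A + B" unfolding A_def B_def by simp
  have F2: "B = D + E" unfolding B_def D_def E_def by simp
  have F3: "(real n + 1 - real i) * A = (real n + 1) * D"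
  proof (cases "i \<le> Suc n")
    case True
    have e: "real (Suc n - i) * real (Suc n choose i) = real (Suc n) * real (n choose i)"
      using binomial_absorb_comp[of "Suc n" i] by (metis diff_Suc_1 of_nat_mult)
    have r: "real (Suc n - i) = real n + 1 - real i" using True by (simp add: of_nat_diff)
    show ?thesis using e unfolding r A_def D_def by simp
  next
    case False
    then show ?thesis unfolding A_def D_def by (simp add: binomial_eq_0)
  qed
  show ?thesis unfolding F1 A_def[symmetric] B_def[symmetric] E_def[symmetric]
    using F2 F3 by (simp add: algebra_simps)
qed

lemma term_rec: "real (Suc (Suc n)) * (real (Suc (Suc n) choose Suc i) * y ^ Suc i / fact (Suc i)) =
   real (2 * n + 3) * (real (Suc n choose Suc i) * y ^ Suc i / fact (Suc i)) + y * (real (Suc n choose i) * y ^ i / fact i)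
   - real (Suc n) * (real (n choose Suc i) * y ^ Suc i / fact (Suc i))"
proof -
  have fi: "fact (Suc i) = real (Suc i) * fact i" by simp
  have "real (Suc (Suc n)) * (real (Suc (Suc n) choose Suc i) * y ^ Suc i / fact (Suc i)) =
     (real (Suc (Suc n)) * real (Suc (Suc n) choose Suc i)) * (y ^ Suc i / fact (Suc i))" by simp
  also have "\<dots> = (real (2 * n + 3) * real (Suc n choose Suc i) + real (Suc i) * real (Suc n choose i) - real (Suc n) * real (n choose Suc i)) * (y ^ Suc i / fact (Suc i))"
    by (simp only: binom_rec)
  also have "\<dots> = real (2 * n + 3) * (real (Suc n choose Suc i) * y ^ Suc i / fact (Suc i)) + (real (Suc i) * real (Suc n choose i)) * (y ^ Suc i / fact (Suc i))
   - real (Suc n) * (real (n choose Suc i) * y ^ Suc i / fact (Suc i))"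
    by (simp only: left_diff_distrib distrib_right mult.assoc times_divide_eq_right add_divide_distrib diff_divide_distrib)
  also have "(real (Suc i) * real (Suc n choose i)) * (y ^ Suc i / fact (Suc i)) = y * (real (Suc n choose i) * y ^ i / fact i)"
    unfolding fi by (simp add: field_simps del: binomial_Suc_Suc of_nat_Suc)
  finally show ?thesis .
qed

lemma Lg_rec: "real (Suc (Suc n)) * Lg (Suc (Suc n)) y = (real (2 * n + 3) + y) * Lg (Suc n) y - real (Suc n) * Lg n y"
proof -
  define f where "f = (\<lambda>m j. real (m choose j) * y ^ j / fact j)"
  have L: "Lg m y = 1 + (\<Sum>i\<le>Suc n. f m (Suc i))" if "m \<le> Suc (Suc n)" for m
  proof -
    have "Lg m y = (\<Sum>j\<le>Suc (Suc n). f m j)" unfolding f_def by (rule Lg_ext[OF that])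
    also have "\<dots> = f m 0 + (\<Sum>i\<le>Suc n. f m (Suc i))" by (rule sum.atMost_Suc_shift)
    finally show ?thesis by (simp add: f_def)
  qed
  have Y: "y * Lg (Suc n) y = (\<Sum>i\<le>Suc n. y * f (Suc n) i)"
    by (simp only: Lg_def f_def sum_distrib_left)
  have T: "(\<Sum>i\<le>Suc n. real (Suc (Suc n)) * f (Suc (Suc n)) (Suc i)) =
     (\<Sum>i\<le>Suc n. real (2 * n + 3) * f (Suc n) (Suc i) + y * f (Suc n) i - real (Suc n) * f n (Suc i))"
    unfolding f_def by (rule sum.cong[OF refl]) (rule term_rec)
  have "real (Suc (Suc n)) * Lg (Suc (Suc n)) y = real (Suc (Suc n)) + (\<Sum>i\<le>Suc n. real (Suc (Suc n)) * f (Suc (Suc n)) (Suc i))"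
    unfolding L[OF order_refl] by (simp add: sum_distrib_left algebra_simps)
  also have "\<dots> = real (2 * n + 3) * (1 + (\<Sum>i\<le>Suc n. f (Suc n) (Suc i))) + (\<Sum>i\<le>Suc n. y * f (Suc n) i)
       - real (Suc n) * (1 + (\<Sum>i\<le>Suc n. f n (Suc i)))"
    unfolding T by (simp only: sum.distrib sum_subtractf sum_distrib_left distrib_left) (simp add: algebra_simps)
  also have "\<dots> = (real (2 * n + 3) + y) * Lg (Suc n) y - real (Suc n) * Lg n y"
    unfolding distrib_right Y[symmetric] L[of "Suc n", simplified] L[of n, simplified] by simp
  finally show ?thesis .
qed

definition Pn :: "nat \<Rightarrow> real \<Rightarrow> real" where "Pn n x = (-1) ^ n * Lg n (- x)"

lemma Pn_0: "Pn 0 x = 1" by (simp add: Pn_def Lg_def)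
lemma Pn_1: "Pn (Suc 0) x = x - 1" by (simp add: Pn_def Lg_def)

lemma Pn_rec: "real (Suc (Suc n)) * Pn (Suc (Suc n)) x = (x - real (2 * n + 3)) * Pn (Suc n) x - real (Suc n) * Pn n x"
  unfolding Pn_def using arg_cong[OF Lg_rec[of n "- x"], of "\<lambda>t. (-1)^n * t"] by (simp add: algebra_simps)

lemma Pn_mono:
  assumes x: "x > 4 * real N + 2" and n: "Suc n \<le> N"
  shows "0 < Pn n x \<and> Pn n x \<le> Pn (Suc n) x"
  using n
proof (induction n)
  case 0 then show ?case using x by (simp add: Pn_0 Pn_1)
next
  case (Suc n)
  then have ih: "0 < Pn n x" "Pn n x \<le> Pn (Suc n) x" by auto
  have nn: "real n + 2 \<le> real N" using Suc.prems by simp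
  have pos: "0 < Pn (Suc n) x" using ih by linarith
  have "real (Suc n) * Pn n x \<le> real (Suc n) * Pn (Suc n) x"
    by (rule mult_left_mono) (use ih in auto)
  then have "real (Suc (Suc n)) * Pn (Suc (Suc n)) x \<ge> (x - real (2 * n + 3) - real (Suc n)) * Pn (Suc n) x"
    by (simp only: Pn_rec left_diff_distrib)
  moreover have "(x - real (2 * n + 3) - real (Suc n)) * Pn (Suc n) x \<ge> real (Suc (Suc n)) * Pn (Suc n) x"
    using pos x nn by (intro mult_right_mono) auto
  ultimately have "real (Suc (Suc n)) * Pn (Suc (Suc n)) x \<ge> real (Suc (Suc n)) * Pn (Suc n) x" by linarith
  then have "Pn (Suc (Suc n)) x \<ge> Pn (Suc n) x" by (simp del: of_nat_Suc)
  with pos show ?case by simp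
qed

lemma Pn_pos:
  assumes x: "x > 4 * real N + 2" and n: "n \<le> N"
  shows "0 < Pn n x"
proof (cases n)
  case 0 then show ?thesis by (simp add: Pn_0)
next
  case (Suc k)
  then have "0 < Pn k x \<and> Pn k x \<le> Pn (Suc k) x" using Pn_mono[OF x, of k] n by simp
  then show ?thesis using Suc by simp
qed


definition Lam :: "nat \<Rightarrow> real \<Rightarrow> real" where
  "Lam n r = (\<Sum>k\<le>n. real ((n choose k) * (n choose k) * fact k) * 2 ^ (n + n - k) * (-1) ^ k * r ^ (n - k))"

lemma sum_rev_atMost: "(\<Sum>j\<le>n. g j) = (\<Sum>k\<le>n. g (n - k))" for g :: "nat \<Rightarrow> real"
  by (rule sum.reindex_bij_witness[where i="\<lambda>k. n - k" and j="\<lambda>k. n - k"]) auto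

lemma Lam_Pn: "Lam n r = 2 ^ n * fact n * Pn n (2 * r)"
proof -
  have "2 ^ n * fact n * Pn n (2 * r) = (\<Sum>j\<le>n. 2 ^ n * fact n * (-1) ^ n * (real (n choose j) * (- (2 * r)) ^ j / fact j))"
    unfolding Pn_def Lg_def by (simp add: sum_distrib_left mult.assoc)
  also have "\<dots> = (\<Sum>k\<le>n. 2 ^ n * fact n * (-1) ^ n * (real (n choose (n - k)) * (- (2 * r)) ^ (n - k) / fact (n - k)))"
    by (rule sum_rev_atMost)
  also have "\<dots> = Lam n r"
    unfolding Lam_def
  proof (rule sum.cong[OF refl])
    fix k assume "k \<in> {..n}"
    then obtain j where n: "n = k + j" using le_Suc_ex by auto
    have f0: "fact k * fact j * ((k + j) choose k) = (fact (k + j) :: nat)"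
      using binomial_fact_lemma[of k "k + j"] by simp
    have f: "fact (k + j) = fact k * fact j * real ((k + j) choose k)"
      using arg_cong[OF f0, of real] by (simp only: of_nat_mult of_nat_fact)
    have s: "(k + j) choose j = (k + j) choose k"
      using binomial_symmetric[of k "k + j"] by simp
    have mm: "(-1::real) ^ j * (-1) ^ j = 1"
      by (simp add: power_mult_distrib[symmetric])
    have sg: "(-1::real) ^ (k + j) * (- (2 * r)) ^ j = (-1) ^ k * (2 ^ j * r ^ j)"
    proof -
      have a0: "- (2 * r) = (-1) * (2 * r)" by simp
      have a: "(- (2 * r)) ^ j = (-1) ^ j * (2 ^ j * r ^ j)"
        unfolding a0 by (simp only: power_mult_distrib)
      have b: "(-1::real) ^ (k + j) = (-1) ^ k * (-1) ^ j" by (rule power_add)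
      have "(-1::real) ^ (k + j) * (- (2 * r)) ^ j = (-1) ^ k * ((-1) ^ j * (-1) ^ j) * (2 ^ j * r ^ j)"
        unfolding a b by (simp only: mult.assoc)
      then show ?thesis by (simp only: mm mult_1_right)
    qed
    have fj: "fact j \<noteq> (0::real)" by simp
    have nk: "n - k = j" "n + n - k = k + j + j" using n by auto
    have "2 ^ n * fact n * (-1) ^ n * (real (n choose (n - k)) * (- (2 * r)) ^ (n - k) / fact (n - k))
       = 2 ^ (k + j) * (fact k * real ((k + j) choose k)) * real ((k + j) choose k) * ((-1) ^ (k + j) * (- (2 * r)) ^ j) * (fact j / fact j)"
      unfolding nk unfolding n f s by (simp only: mult_ac times_divide_eq_right times_divide_eq_left)
    also have "\<dots> = real (((k + j) choose k) * ((k + j) choose k) * fact k) * 2 ^ (k + j + j) * (-1) ^ k * r ^ j"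
      unfolding sg using fj by (simp add: power_add mult_ac)
    finally show "2 ^ n * fact n * (-1) ^ n * (real (n choose (n - k)) * (- (2 * r)) ^ (n - k) / fact (n - k)) =
         real ((n choose k) * (n choose k) * fact k) * 2 ^ (n + n - k) * (-1) ^ k * r ^ (n - k)"
      unfolding nk by (simp only: n)
  qed
  finally show ?thesis ..
qed

lemma sum_single: "finite A \<Longrightarrow> x \<in> A \<Longrightarrow> (\<And>y. y \<in> A \<Longrightarrow> y \<noteq> x \<Longrightarrow> f y = 0) \<Longrightarrow> sum f A = f x"
  by (simp add: sum.remove sum.neutral)

lemma circle_poly_zero:
  fixes P :: "complex poly"
  assumes "\<And>e. norm e = 1 \<Longrightarrow> poly P e = 0"
  shows "P = 0"
proof (rule ccontr)
  assume "P \<noteq> 0"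
  then have fin: "finite {x. poly P x = 0}" by (rule poly_roots_finite)
  have "{-1..1::real} \<subseteq> Re ` {x. poly P x = 0}"
  proof
    fix t :: real assume t: "t \<in> {-1..1}"
    define e where "e = Complex t (sqrt (1 - t^2))"
    have "\<bar>t\<bar> \<le> 1" using t by auto
    then have "t^2 \<le> 1" by (simp add: abs_square_le_1)
    then have "norm e = 1" unfolding e_def by (simp add: cmod_def)
    then have "poly P e = 0" by (rule assms)
    then show "t \<in> Re ` {x. poly P x = 0}" unfolding e_def
      by (intro image_eqI[where x=e]) (auto simp: e_def)
  qed
  then have "finite {-1..1::real}" using finite_subset fin by blast
  moreover have "\<not> finite {-1..1::real}" by (rule infinite_Icc) simp
  ultimately show False by simp
qed

definition cq :: "nat \<Rightarrow> nat \<Rightarrow> nat \<Rightarrow> complex" where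
  "cq n m k = of_nat ((n choose k) * (m choose k) * fact k) * 2 ^ (n + m - k) * (-1) ^ k"

lemma tq_cq: "tq n m z k = cq n m k * z ^ (n - k) * cnj z ^ (m - k)"
  unfolding tq_def cq_def by simp

lemma pow_split:
  fixes e z w :: complex
  assumes "a + b \<le> M"
  shows "e ^ M * z ^ a * w ^ b = (e * z) ^ a * (e * w) ^ b * e ^ (M - a - b)"
proof -
  have "M = a + b + (M - a - b)" using assms by simp
  then have "e ^ M = e ^ a * e ^ b * e ^ (M - a - b)" by (metis power_add)
  then show ?thesis by (simp add: power_mult_distrib mult_ac)
qed


lemma triple_single: "(\<Sum>n\<le>N. \<Sum>m\<le>N. \<Sum>k\<le>n. (if n = N \<and> m = N \<and> k = (0::nat) then V else 0)) = V"
proof -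
  have a: "(\<Sum>k\<le>n. (if n = N \<and> m = N \<and> k = (0::nat) then V else 0)) = (if n = N \<and> m = N then V else 0)" for n m :: nat
    by (cases "n = N \<and> m = N") (simp_all add: sum.delta, intro sum.neutral, auto)
  have b: "(\<Sum>m\<le>N. (if n = N \<and> m = N then V else 0)) = (if n = N then V else 0)" for n :: nat
    by (cases "n = N") (simp_all add: sum.delta)
  show ?thesis unfolding a b by (simp add: sum.delta)
qed

lemma endgame:
  fixes N :: nat and \<beta> :: "nat \<Rightarrow> complex" and \<alpha> \<gamma> :: complex
  assumes van: "\<And>e. norm e = 1 \<Longrightarrow> (\<Sum>n\<le>N. \<Sum>m\<le>N. \<beta> n * cnj (\<beta> m) * Qf n m (\<alpha> * e + \<gamma> * cnj e)) = 0"
    and bN: "\<beta> N \<noteq> 0"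
    and rho: "(norm \<gamma>)^2 - (norm \<alpha>)^2 > 2 * real N + 1"
  shows False
proof -
  define X where "X = [:\<gamma>, 0, \<alpha>:]"
  define Y where "Y = [:cnj \<alpha>, 0, cnj \<gamma>:]"
  define trm where "trm = (\<lambda>n m k. smult (\<beta> n * cnj (\<beta> m) * cq n m k) (X ^ (n - k) * Y ^ (m - k) * monom 1 (2 * N - (n - k) - (m - k))))"
  define P where "P = (\<Sum>n\<le>N. \<Sum>m\<le>N. \<Sum>k\<le>n. trm n m k)"
  have evalP: "poly P e = e ^ (2 * N) * (\<Sum>n\<le>N. \<Sum>m\<le>N. \<beta> n * cnj (\<beta> m) * Qf n m (\<alpha> * e + \<gamma> * cnj e))"
    if e: "norm e = 1" for e
  proof -
    define z where "z = \<alpha> * e + \<gamma> * cnj e"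
    have ee: "e * cnj e = 1" using complex_norm_square[of e] e by simp
    have pX: "poly X e = e * z" unfolding X_def z_def
      by (simp add: algebra_simps) (metis ee mult.assoc mult.commute mult.right_neutral)
    have pY: "poly Y e = e * cnj z" unfolding Y_def z_def
      by (simp add: algebra_simps) (metis ee mult.assoc mult.commute mult.right_neutral)
    have "poly P e = (\<Sum>n\<le>N. \<Sum>m\<le>N. \<Sum>k\<le>n. poly (trm n m k) e)"
      unfolding P_def by (simp add: poly_sum)
    also have "\<dots> = (\<Sum>n\<le>N. \<Sum>m\<le>N. \<Sum>k\<le>n. e ^ (2 * N) * (\<beta> n * cnj (\<beta> m) * tq n m z k))"
    proof (intro sum.cong refl)
      fix n m k assume "n \<in> {..N}" "m \<in> {..N}" "k \<in> {..n}"
      then have ab: "(n - k) + (m - k) \<le> 2 * N" by auto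
      show "poly (trm n m k) e = e ^ (2 * N) * (\<beta> n * cnj (\<beta> m) * tq n m z k)"
        unfolding trm_def tq_cq using pow_split[OF ab, of e z "cnj z"]
        by (simp add: pX pY poly_monom mult_ac)
    qed
    also have "\<dots> = e ^ (2 * N) * (\<Sum>n\<le>N. \<Sum>m\<le>N. \<beta> n * cnj (\<beta> m) * Qf n m z)"
      unfolding Qf_def by (simp add: sum_distrib_left)
    finally show ?thesis unfolding z_def .
  qed
  have P0: "P = 0"
    by (rule circle_poly_zero) (simp add: evalP van)
  have gam: "\<gamma> \<noteq> 0"
  proof
    assume "\<gamma> = 0"
    with rho have "(norm \<alpha>)^2 < - (2 * real N + 1)" by simp
    moreover have "(norm \<alpha>)^2 \<ge> 0" by simp
    ultimately show False by linarith
  qed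
  have alpha0: "\<alpha> = 0"
  proof (rule ccontr)
    assume a: "\<alpha> \<noteq> 0"
    have dX: "degree X = 2" "lead_coeff X = \<alpha>" using a unfolding X_def by (simp_all add: numeral_2_eq_2)
    have dY: "degree Y = 2" "lead_coeff Y = cnj \<gamma>" using gam unfolding Y_def by (simp_all add: numeral_2_eq_2)
    have X0: "X \<noteq> 0" "Y \<noteq> 0" using dX dY by auto
    have cX: "coeff X 2 = \<alpha>" "coeff Y 2 = cnj \<gamma>" unfolding X_def Y_def by (simp_all add: numeral_2_eq_2)
    have cf: "coeff (trm n m k) (4 * N) = (if n = N \<and> m = N \<and> k = 0 then \<beta> N * cnj (\<beta> N) * cq N N 0 * (\<alpha> ^ N * cnj \<gamma> ^ N) else 0)"
      if nmk: "n \<le> N" "m \<le> N" "k \<le> n" for n m k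
    proof (cases "n = N \<and> m = N \<and> k = 0")
      case True
      have dXY: "degree (X ^ N * Y ^ N) = 4 * N"
        using X0 by (simp add: degree_mult_eq degree_power_eq dX dY)
      have "coeff (X ^ N * Y ^ N) (4 * N) = \<alpha> ^ N * cnj \<gamma> ^ N"
        using lead_coeff_mult[of "X ^ N" "Y ^ N"] unfolding dXY by (simp add: lead_coeff_power dX dY cX)
      then show ?thesis using True unfolding trm_def by simp
    next
      case False
      have "(n - k) + (m - k) < 2 * N" using False nmk by auto
      moreover have "degree (trm n m k) \<le> degree X * (n - k) + degree Y * (m - k) + (2 * N - (n - k) - (m - k))"
        unfolding trm_def
        by (rule order.trans[OF degree_smult_le] order.trans[OF degree_mult_le] add_mono degree_power_le degree_monom_le)+
      ultimately have "degree (trm n m k) < 4 * N" unfolding dX(1) dY(1) by arith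
      then have "coeff (trm n m k) (4 * N) = 0" by (rule coeff_eq_0)
      then show ?thesis unfolding if_not_P[OF False] .
    qed
    have "coeff P (4 * N) = (\<Sum>n\<le>N. \<Sum>m\<le>N. \<Sum>k\<le>n. coeff (trm n m k) (4 * N))"
      unfolding P_def by (simp add: coeff_sum)
    also have "\<dots> = (\<Sum>n\<le>N. \<Sum>m\<le>N. \<Sum>k\<le>n. (if n = N \<and> m = N \<and> k = 0 then \<beta> N * cnj (\<beta> N) * cq N N 0 * (\<alpha> ^ N * cnj \<gamma> ^ N) else 0))"
      by (intro sum.cong refl) (simp add: cf)
    also have "\<dots> = \<beta> N * cnj (\<beta> N) * cq N N 0 * (\<alpha> ^ N * cnj \<gamma> ^ N)"
      by (rule triple_single)
    finally have "coeff P (4 * N) = \<beta> N * cnj (\<beta> N) * cq N N 0 * (\<alpha> ^ N * cnj \<gamma> ^ N)" .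
    moreover have "\<beta> N * cnj (\<beta> N) * cq N N 0 * (\<alpha> ^ N * cnj \<gamma> ^ N) \<noteq> 0"
      using a gam bN by (simp add: cq_def)
    ultimately show False using P0 by simp
  qed
  define r where "r = (norm \<gamma>)^2"
  have r: "r > 2 * real N + 1" using rho alpha0 unfolding r_def by simp
  have Xm: "X = monom \<gamma> 0" unfolding X_def alpha0 by (simp add: monom_0)
  have Ym: "Y = monom (cnj \<gamma>) 2" unfolding Y_def alpha0 by (simp add: numeral_2_eq_2 monom_Suc monom_0)
  have trm_m: "trm n m k = monom (\<beta> n * cnj (\<beta> m) * cq n m k * (\<gamma> ^ (n - k) * cnj \<gamma> ^ (m - k))) (2 * (m - k) + (2 * N - (n - k) - (m - k)))" for n m k
    unfolding trm_def Xm Ym by (simp add: monom_power mult_monom smult_monom mult_ac add.commute)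
  have inner: "(\<Sum>m\<le>N. \<Sum>k\<le>n. coeff (trm n m k) (2 * N)) = complex_of_real ((norm (\<beta> n))^2 * Lam n r)"
    if n: "n \<le> N" for n
  proof -
    have "(\<Sum>m\<le>N. \<Sum>k\<le>n. coeff (trm n m k) (2 * N)) = (\<Sum>k\<le>n. coeff (trm n n k) (2 * N))"
    proof (rule sum_single)
      fix m assume m: "m \<in> {..N}" "m \<noteq> n"
      show "(\<Sum>k\<le>n. coeff (trm n m k) (2 * N)) = 0"
      proof (rule sum.neutral, intro ballI)
        fix k assume k: "k \<in> {..n}"
        show "coeff (trm n m k) (2 * N) = 0"
        proof (cases "k \<le> m")
          case True
          then have "2 * (m - k) + (2 * N - (n - k) - (m - k)) \<noteq> 2 * N" using m k n by auto
          then show ?thesis unfolding trm_m by simp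
        next
          case False
          then have "cq n m k = 0" unfolding cq_def by (simp add: binomial_eq_0)
          then show ?thesis unfolding trm_m by simp
        qed
      qed
    qed (use n in auto)
    also have "\<dots> = (\<Sum>k\<le>n. complex_of_real ((norm (\<beta> n))^2 * (real ((n choose k) * (n choose k) * fact k) * 2 ^ (n + n - k) * (-1) ^ k * r ^ (n - k))))"
    proof (intro sum.cong refl)
      fix k assume k: "k \<in> {..n}"
      have e: "2 * (n - k) + (2 * N - (n - k) - (n - k)) = 2 * N" using k n by auto
      have b: "\<beta> n * cnj (\<beta> n) = complex_of_real ((norm (\<beta> n))^2)" by (rule complex_norm_square[symmetric])
      have rr: "complex_of_real r = \<gamma> * cnj \<gamma>" unfolding r_def by (rule complex_norm_square)
      have g: "\<gamma> ^ (n - k) * cnj \<gamma> ^ (n - k) = complex_of_real (r ^ (n - k))"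
        unfolding of_real_power rr by (simp only: power_mult_distrib)
      show "coeff (trm n n k) (2 * N) = complex_of_real ((norm (\<beta> n))^2 * (real ((n choose k) * (n choose k) * fact k) * 2 ^ (n + n - k) * (-1) ^ k * r ^ (n - k)))"
        unfolding trm_m e coeff_monom if_True b g cq_def by simp
    qed
    also have "\<dots> = complex_of_real ((norm (\<beta> n))^2 * Lam n r)"
      unfolding Lam_def by (simp add: sum_distrib_left)
    finally show ?thesis .
  qed
  have "coeff P (2 * N) = (\<Sum>n\<le>N. \<Sum>m\<le>N. \<Sum>k\<le>n. coeff (trm n m k) (2 * N))"
    unfolding P_def by (simp add: coeff_sum)
  also have "\<dots> = complex_of_real (\<Sum>n\<le>N. (norm (\<beta> n))^2 * Lam n r)"
    by (simp add: inner)
  finally have c2: "coeff P (2 * N) = complex_of_real (\<Sum>n\<le>N. (norm (\<beta> n))^2 * Lam n r)" .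
  have lampos: "Lam n r > 0" if "n \<le> N" for n
  proof -
    have "Pn n (2 * r) > 0" using Pn_pos[OF _ that, of "2 * r"] r by simp
    then show ?thesis unfolding Lam_Pn by simp
  qed
  have "(\<Sum>n\<le>N. (norm (\<beta> n))^2 * Lam n r) > 0"
  proof (rule sum_pos2[of _ N])
    show "0 < (norm (\<beta> N))^2 * Lam N r" using bN lampos[of N] by simp
    fix i assume "i \<in> {..N}"
    then have "Lam i r > 0" using lampos by simp
    then show "0 \<le> (norm (\<beta> i))^2 * Lam i r" by simp
  qed auto
  moreover have "complex_of_real (\<Sum>n\<le>N. (norm (\<beta> n))^2 * Lam n r) = 0"
    using c2 P0 by simp
  ultimately show False by (simp only: of_real_eq_0_iff)
qed

theorem theorem8:
  fixes hbar R :: real and f :: "real \<Rightarrow> complex" and N :: nat and b :: "nat \<Rightarrow> complex"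
    and S :: "real^2^2"
  assumes hbar: "hbar > 0"
    and f_L2: "square_integrable f"
    and S_det: "det S = 1"
    and bN: "b N \<noteq> 0"
    and Wf: "\<And>z :: real^2. wigner hbar f f (z $ 1) (z $ 2) =
              (\<Sum>n\<le>N. \<Sum>m\<le>N. b n * cnj (b m) *
                 wigner hbar (hermite_fun hbar n) (hermite_fun hbar m) ((S *v z) $ 1) ((S *v z) $ 2))"
    and R: "R > 0"
    and vanish: "\<And>z :: real^2. norm z = R \<Longrightarrow> wigner hbar f f (z $ 1) (z $ 2) = 0"
  shows "real N \<ge> (R\<^sup>2 / hbar - 1) / 2"
proof (rule ccontr)
  assume "\<not> real N \<ge> (R\<^sup>2 / hbar - 1) / 2"
  then have big: "R\<^sup>2 / hbar > 2 * real N + 1" by simp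
  define \<beta> where "\<beta> n = b n * complex_of_real (cn hbar n)" for n
  define s11 where "s11 = S $ 1 $ 1"
  define s12 where "s12 = S $ 1 $ 2"
  define s21 where "s21 = S $ 2 $ 1"
  define s22 where "s22 = S $ 2 $ 2"
  define c where "c = R / (2 * sqrt hbar)"
  define \<alpha> where "\<alpha> = Complex (c * (s11 - s22)) (- c * (s21 + s12))"
  define \<gamma> where "\<gamma> = Complex (c * (s11 + s22)) (c * (s12 - s21))"
  have sh: "sqrt hbar > 0" using hbar by simp
  have shh: "sqrt hbar * sqrt hbar = hbar" using hbar by simp
  have cnpos: "cn hbar n > 0" for n
    unfolding cn_def using hbar by simp
  have det: "s11 * s22 - s12 * s21 = 1"
    using S_det unfolding det_2 s11_def s12_def s21_def s22_def .
  have rho: "(norm \<gamma>)^2 - (norm \<alpha>)^2 = R\<^sup>2 / hbar"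
  proof -
    have "(norm \<gamma>)^2 - (norm \<alpha>)^2 = c^2 * 4 * (s11 * s22 - s12 * s21)"
      unfolding \<alpha>_def \<gamma>_def cmod_power2 by (simp add: power2_eq_square algebra_simps)
    also have "c^2 * 4 = R\<^sup>2 / hbar"
      unfolding c_def using shh sh by (simp add: power2_eq_square field_simps)
    finally show ?thesis using det by simp
  qed
  have bN': "\<beta> N \<noteq> 0" unfolding \<beta>_def using bN cnpos[of N] by simp
  have T0: "(\<Sum>n\<le>N. \<Sum>m\<le>N. \<beta> n * cnj (\<beta> m) * Qf n m (\<alpha> * e + \<gamma> * cnj e)) = 0"
    if e: "norm e = 1" for e
  proof -
    define z :: "real^2" where "z = vector [R * Re e, R * Im e]"
    have z1: "z $ 1 = R * Re e" and z2: "z $ 2 = R * Im e" unfolding z_def by simp_all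
    have nz: "norm z = R"
    proof -
      have "norm z = sqrt ((R * Re e)^2 + (R * Im e)^2)"
        unfolding norm_vec_def L2_set_def sum_2 z1 z2 by simp
      also have "(R * Re e)^2 + (R * Im e)^2 = R^2 * (norm e)^2"
        unfolding cmod_power2 by (simp add: power_mult_distrib algebra_simps)
      finally show ?thesis using e R by simp
    qed
    define w1 where "w1 = (S *v z) $ 1"
    define w2 where "w2 = (S *v z) $ 2"
    have w1: "w1 = s11 * (R * Re e) + s12 * (R * Im e)"
      unfolding w1_def matrix_vector_mult_def sum_2 z1 z2 s11_def s12_def by simp
    have w2: "w2 = s21 * (R * Re e) + s22 * (R * Im e)"
      unfolding w2_def matrix_vector_mult_def sum_2 z1 z2 s21_def s22_def by simp
    define \<zeta> where "\<zeta> = complex_of_real (w1 / sqrt hbar) - \<i> * complex_of_real (w2 / sqrt hbar)"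
    have zeta: "\<zeta> = \<alpha> * e + \<gamma> * cnj e"
    proof (rule complex_eqI)
      have a: "Re (\<alpha> * e + \<gamma> * cnj e) = 2 * c * (s11 * Re e + s12 * Im e)"
        unfolding \<alpha>_def \<gamma>_def by (simp add: algebra_simps)
      have b: "Re \<zeta> = 2 * c * (s11 * Re e + s12 * Im e)"
        unfolding \<zeta>_def w1 c_def using sh by (simp add: field_simps)
      show "Re \<zeta> = Re (\<alpha> * e + \<gamma> * cnj e)" using a b by simp
      have a': "Im (\<alpha> * e + \<gamma> * cnj e) = - 2 * c * (s21 * Re e + s22 * Im e)"
        unfolding \<alpha>_def \<gamma>_def by (simp add: algebra_simps)
      have b': "Im \<zeta> = - 2 * c * (s21 * Re e + s22 * Im e)"
        unfolding \<zeta>_def w2 c_def using sh by (simp add: field_simps)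
      show "Im \<zeta> = Im (\<alpha> * e + \<gamma> * cnj e)" using a' b' by simp
    qed
    define E where "E = exp (- (w1^2 + w2^2) / hbar)"
    have "0 = wigner hbar f f (z $ 1) (z $ 2)" using vanish[OF nz] by simp
    also have "\<dots> = (\<Sum>n\<le>N. \<Sum>m\<le>N. b n * cnj (b m) *
         (complex_of_real (kap hbar * cn hbar n * cn hbar m * E) * Qf n m \<zeta>))"
      unfolding Wf w1_def[symmetric] w2_def[symmetric] wigner_herm[OF hbar] E_def \<zeta>_def ..
    also have "\<dots> = complex_of_real (kap hbar * E) * (\<Sum>n\<le>N. \<Sum>m\<le>N. \<beta> n * cnj (\<beta> m) * Qf n m \<zeta>)"
      unfolding \<beta>_def by (simp add: sum_distrib_left algebra_simps)
    finally have "complex_of_real (kap hbar * E) * (\<Sum>n\<le>N. \<Sum>m\<le>N. \<beta> n * cnj (\<beta> m) * Qf n m \<zeta>) = 0" by simp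
    moreover have "kap hbar * E \<noteq> 0"
      unfolding kap_def E_def using hbar by simp
    ultimately show ?thesis unfolding zeta by simp
  qed
  have "(norm \<gamma>)^2 - (norm \<alpha>)^2 > 2 * real N + 1" using rho big by simp
  then show False using endgame[where N=N and \<beta>=\<beta> and \<alpha>=\<alpha> and \<gamma>=\<gamma>] T0 bN' by blast
qed

end
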